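(* Let $(\mathfrak D,d)$ be a finite metric space, $p\in(1,\infty)$, $\vartheta\in\mathcal P(\mathfrak D)$, and let $\{\mu_k\}_{k\in\mathbb{N}}$ be a countable dense subset of $(\mathcal P(\mathfrak D),W_p)$. For each $k$ let $(\varphi_k,\psi_k)$ be functions $\mathfrak D\to\mathbb{R}$ with $\psi_k=\varphi_k^c$, $\varphi_k=\psi_k^c$ and $W_p^p(\vartheta,\mu_k)=\int_{\mathfrak D}\varphi_k\,d\mu_k+\int_{\mathfrak D}\psi_k\,d\vartheta$. For finite $I\subset\mathbb{N}$ define $G_I(\mu):=\max_{k\in I}\big(\int\varphi_k\,d\mu+\int\psi_k\,d\vartheta\big)$ and $F(\mu):=W_p^p(\vartheta,\mu)$ for $\mu\in\mathcal P(\mathfrak D)$. Then for every $\varepsilon>0$ there exists a finite $I_\varepsilon\subset\mathbb{N}$ with \[\sup_{\mu\in\mathcal P(\mathfrak D)}|F(\mu)-G_{I_\varepsilon}(\mu)|\le\varepsilon.\]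
   Context: $\mathcal P(\mathfrak D)$ is the set of probability measures on $\mathfrak D$, $W_p$ the $p$-Wasserstein distance with cost $d(x,y)^p$. The $c$-transform is $\varphi^c(x):=\inf_{y\in\mathfrak D}\big(d(x,y)^p-\varphi(y)\big)$. *)

theory Defs
  imports "HOL-Probability.Probability"
begin

text \<open>The finite metric space is modelled as a type of class finite metric_space;
probability measures on it are pmfs; integrals are pmf expectations.\<close>

definition couplings :: "'a pmf \<Rightarrow> 'b pmf \<Rightarrow> ('a \<times> 'b) pmf set" where
  "couplings \<mu> \<nu> = {\<pi>. map_pmf fst \<pi> = \<mu> \<and> map_pmf snd \<pi> = \<nu>}"

definition Wpp :: "real \<Rightarrow> 'a::metric_space pmf \<Rightarrow> 'a pmf \<Rightarrow> real" where
  "Wpp p \<mu> \<nu> = (INF \<pi>\<in>couplings \<mu> \<nu>.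
      measure_pmf.expectation \<pi> (\<lambda>(x,y). dist x y powr p))"

definition Wp :: "real \<Rightarrow> 'a::metric_space pmf \<Rightarrow> 'a pmf \<Rightarrow> real" where
  "Wp p \<mu> \<nu> = Wpp p \<mu> \<nu> powr (1 / p)"

definition c_transform :: "real \<Rightarrow> ('a::{metric_space,finite} \<Rightarrow> real) \<Rightarrow> 'a \<Rightarrow> real" where
  "c_transform p \<phi> x = (INF y. dist x y powr p - \<phi> y)"

end

theory Submission imports Defs "HOL-Analysis.Analysis" begin

lemma exp_sum:
  fixes M :: "'b::finite pmf"
  shows "measure_pmf.expectation M f = (\<Sum>x\<in>UNIV. pmf M x * f x)"
  by (subst integral_measure_pmf_real[where A=UNIV]) (auto simp: mult.commute)

lemma pmf_fst:
  fixes \<pi> :: "('b::finite \<times> 'c::finite) pmf"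
  shows "pmf (map_pmf fst \<pi>) x = (\<Sum>y\<in>UNIV. pmf \<pi> (x,y))"
proof -
  have eq: "fst -` {x} = Pair x ` UNIV" by auto
  show ?thesis
    unfolding pmf_map measure_measure_pmf_finite[OF finite] eq by (simp add: sum.reindex inj_on_def)
qed

lemma pmf_snd:
  fixes \<pi> :: "('b::finite \<times> 'c::finite) pmf"
  shows "pmf (map_pmf snd \<pi>) y = (\<Sum>x\<in>UNIV. pmf \<pi> (x,y))"
proof -
  have eq: "snd -` {y} = (\<lambda>x. (x,y)) ` UNIV" by auto
  show ?thesis
    unfolding pmf_map measure_measure_pmf_finite[OF finite] eq by (simp add: sum.reindex inj_on_def)
qed

lemma cost_sum:
  fixes \<pi> :: "('b::finite \<times> 'c::finite) pmf"
  shows "measure_pmf.expectation \<pi> (\<lambda>(x,y). c x y) = (\<Sum>x\<in>UNIV. \<Sum>y\<in>UNIV. pmf \<pi> (x,y) * c x y)"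
  by (simp add: exp_sum sum.cartesian_product split_def)

lemma pair_coupling: "pair_pmf \<mu> \<nu> \<in> couplings \<mu> \<nu>"
  by (simp add: couplings_def map_fst_pair_pmf map_snd_pair_pmf)

definition cst :: "real \<Rightarrow> ('a::{metric_space,finite} \<times> 'a) pmf \<Rightarrow> real" where
  "cst p \<pi> = measure_pmf.expectation \<pi> (\<lambda>(x,y). dist x y powr p)"

lemma cst_nonneg: "0 \<le> cst p \<pi>"
  unfolding cst_def by (rule integral_nonneg_AE) auto

lemma Wpp_cst: "Wpp p \<mu> \<nu> = (INF \<pi>\<in>couplings \<mu> \<nu>. cst p \<pi>)"
  by (simp add: Wpp_def cst_def)

lemma bdd_cst: "bdd_below (cst p ` S)"
  by (rule bdd_belowI[where m=0]) (auto simp: cst_nonneg)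

lemma Wpp_le: "\<pi> \<in> couplings \<mu> \<nu> \<Longrightarrow> Wpp p \<mu> \<nu> \<le> cst p \<pi>"
  unfolding Wpp_cst by (rule cINF_lower[OF bdd_cst])

lemma Wpp_ge: "(\<And>\<pi>. \<pi> \<in> couplings \<mu> \<nu> \<Longrightarrow> c \<le> cst p \<pi>) \<Longrightarrow> c \<le> Wpp p \<mu> \<nu>"
  unfolding Wpp_cst by (rule cINF_greatest) (use pair_coupling in auto)

lemma Wpp_nonneg: "0 \<le> Wpp p (\<mu>::'a::{metric_space,finite} pmf) \<nu>"
  by (rule Wpp_ge) (rule cst_nonneg)

lemma Wpp_approx:
  assumes "\<eta> > 0"
  shows "\<exists>\<pi>\<in>couplings \<mu> \<nu>. cst p \<pi> < Wpp p \<mu> \<nu> + \<eta>"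
proof (rule ccontr)
  assume "\<not> ?thesis"
  then have "Wpp p \<mu> \<nu> + \<eta> \<le> Wpp p \<mu> \<nu>" by (intro Wpp_ge) auto
  with assms show False by simp
qed

lemma cst_sum: "cst p \<pi> = (\<Sum>x\<in>UNIV. \<Sum>y\<in>UNIV. pmf \<pi> (x,y) * dist x y powr p)"
  unfolding cst_def by (rule cost_sum)

lemma couplingD:
  fixes \<pi> :: "('b::finite \<times> 'c::finite) pmf"
  assumes "\<pi> \<in> couplings \<mu> \<nu>"
  shows "pmf \<mu> x = (\<Sum>y\<in>UNIV. pmf \<pi> (x,y))" "pmf \<nu> y = (\<Sum>x\<in>UNIV. pmf \<pi> (x,y))"
  using assms by (auto simp: couplings_def pmf_fst pmf_snd)

lemma mk_coupling:
  fixes \<sigma> :: "'a::{metric_space,finite} \<times> 'a \<Rightarrow> real"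
  assumes nn: "\<And>z. 0 \<le> \<sigma> z"
    and m1: "\<And>x. (\<Sum>y\<in>UNIV. \<sigma> (x,y)) = pmf \<mu> x"
    and m2: "\<And>y. (\<Sum>x\<in>UNIV. \<sigma> (x,y)) = pmf \<nu> y"
  shows "Wpp p \<mu> \<nu> \<le> (\<Sum>x\<in>UNIV. \<Sum>y\<in>UNIV. \<sigma> (x,y) * dist x y powr p)"
proof -
  have tot: "(\<Sum>z\<in>UNIV. \<sigma> z) = 1"
  proof -
    have "(\<Sum>x\<in>UNIV. \<Sum>y\<in>UNIV. \<sigma> (x,y)) = (\<Sum>z\<in>UNIV\<times>UNIV. \<sigma> z)"
      by (simp add: sum.cartesian_product split_def)
    then show ?thesis by (simp add: m1 sum_pmf_eq_1)
  qed
  have int: "(\<integral>\<^sup>+z. ennreal (\<sigma> z) \<partial>count_space UNIV) = 1"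
    by (simp add: nn_integral_count_space_finite nn tot)
  define \<pi> where "\<pi> = embed_pmf \<sigma>"
  have pp: "pmf \<pi> z = \<sigma> z" for z
    unfolding \<pi>_def using nn int by (rule pmf_embed_pmf)
  have "\<pi> \<in> couplings \<mu> \<nu>"
    unfolding couplings_def by (auto intro!: pmf_eqI simp: pmf_fst pmf_snd pp m1 m2)
  then have "Wpp p \<mu> \<nu> \<le> cst p \<pi>" by (rule Wpp_le)
  also have "\<dots> = (\<Sum>x\<in>UNIV. \<Sum>y\<in>UNIV. \<sigma> (x,y) * dist x y powr p)"
    by (simp add: cst_sum pp)
  finally show ?thesis .
qed


lemma ctrans_le: "c_transform p \<phi> x \<le> dist x y powr p - \<phi> y"
  unfolding c_transform_def by (rule cINF_lower) (simp_all add: bdd_below_finite)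

lemma ctrans_osc:
  fixes \<psi> :: "'a::{metric_space,finite} \<Rightarrow> real" and x x' :: 'a
  assumes D: "\<And>x y::'a. dist x y powr p \<le> D"
  shows "c_transform p \<psi> x \<le> c_transform p \<psi> x' + D"
proof -
  have "c_transform p \<psi> x - D \<le> dist x' y powr p - \<psi> y" for y
    using ctrans_le[of p \<psi> x y] D[of x y] powr_ge_zero[of "dist x' y" p] by linarith
  then have "c_transform p \<psi> x - D \<le> (INF y. dist x' y powr p - \<psi> y)"
    by (intro cINF_greatest) auto
  then show ?thesis unfolding c_transform_def[of p \<psi> x'] by simp
qed

lemma lower:
  fixes \<theta> \<mu> :: "'a::{metric_space,finite} pmf"
  assumes psi: "\<psi> = c_transform p \<phi>"
  shows "measure_pmf.expectation \<mu> \<phi> + measure_pmf.expectation \<theta> \<psi> \<le> Wpp p \<theta> \<mu>"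
proof (rule Wpp_ge)
  fix \<pi> assume c: "\<pi> \<in> couplings \<theta> \<mu>"
  have e1: "measure_pmf.expectation \<theta> \<psi> = (\<Sum>x\<in>UNIV. \<Sum>y\<in>UNIV. pmf \<pi> (x,y) * \<psi> x)"
    by (simp add: exp_sum couplingD(1)[OF c] sum_distrib_right)
  have e2: "measure_pmf.expectation \<mu> \<phi> = (\<Sum>x\<in>UNIV. \<Sum>y\<in>UNIV. pmf \<pi> (x,y) * \<phi> y)"
    by (simp add: exp_sum couplingD(2)[OF c] sum_distrib_right) (rule sum.swap)
  have "measure_pmf.expectation \<mu> \<phi> + measure_pmf.expectation \<theta> \<psi>
      = (\<Sum>x\<in>UNIV. \<Sum>y\<in>UNIV. pmf \<pi> (x,y) * (\<psi> x + \<phi> y))"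
    by (simp add: e1 e2 sum.distrib[symmetric] distrib_left add.commute)
  also have "\<dots> \<le> (\<Sum>x\<in>UNIV. \<Sum>y\<in>UNIV. pmf \<pi> (x,y) * dist x y powr p)"
    using ctrans_le[of p \<phi>] unfolding psi[symmetric]
    by (intro sum_mono mult_left_mono) (auto simp: algebra_simps)
  finally show "measure_pmf.expectation \<mu> \<phi> + measure_pmf.expectation \<theta> \<psi> \<le> cst p \<pi>"
    by (simp add: cst_sum)
qed

lemma L1_le:
  fixes \<nu> \<mu> :: "'a::{metric_space,finite} pmf"
  assumes c: "\<pi> \<in> couplings \<nu> \<mu>" and d: "\<delta> > 0"
    and dl: "\<And>x y::'a. x \<noteq> y \<Longrightarrow> \<delta> \<le> dist x y powr p"
  shows "(\<Sum>x\<in>UNIV. \<bar>pmf \<nu> x - pmf \<mu> x\<bar>) \<le> 2 * cst p \<pi> / \<delta>"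
proof -
  define g where "g x y = (if x = y then 0 else pmf \<pi> (x,y))" for x y
  have "\<bar>pmf \<nu> x - pmf \<mu> x\<bar> = \<bar>\<Sum>y\<in>UNIV. pmf \<pi> (x,y) - pmf \<pi> (y,x)\<bar>" for x
    by (simp add: couplingD[OF c] sum_subtractf)
  also have "\<bar>\<Sum>y\<in>UNIV. pmf \<pi> (x,y) - pmf \<pi> (y,x)\<bar> \<le> (\<Sum>y\<in>UNIV. g x y + g y x)" for x
  proof -
    have ab: "\<bar>pmf \<pi> a - pmf \<pi> b\<bar> \<le> pmf \<pi> a + pmf \<pi> b" for a b
      using pmf_nonneg[of \<pi> a] pmf_nonneg[of \<pi> b] by (simp add: abs_le_iff)
    show ?thesis
      by (rule order_trans[OF sum_abs]) (intro sum_mono, auto simp: g_def ab)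
  qed
  finally have "(\<Sum>x\<in>UNIV. \<bar>pmf \<nu> x - pmf \<mu> x\<bar>) \<le> (\<Sum>x\<in>UNIV. \<Sum>y\<in>UNIV. g x y + g y x)"
    by (intro sum_mono)
  also have "\<dots> = 2 * (\<Sum>x\<in>UNIV. \<Sum>y\<in>UNIV. g x y)"
  proof -
    have "(\<Sum>x\<in>UNIV. \<Sum>y\<in>UNIV. g y x) = (\<Sum>x\<in>UNIV. \<Sum>y\<in>UNIV. g x y)"
      by (rule sum.swap)
    then show ?thesis by (simp add: sum.distrib)
  qed
  also have "(\<Sum>x\<in>UNIV. \<Sum>y\<in>UNIV. g x y) \<le> (\<Sum>x\<in>UNIV. \<Sum>y\<in>UNIV. pmf \<pi> (x,y) * dist x y powr p / \<delta>)"
  proof (intro sum_mono)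
    fix x y
    show "g x y \<le> pmf \<pi> (x,y) * dist x y powr p / \<delta>"
    proof (cases "x = y")
      case False
      have "pmf \<pi> (x,y) * \<delta> \<le> pmf \<pi> (x,y) * dist x y powr p"
        using dl[OF False] by (intro mult_left_mono) auto
      then show ?thesis using d False by (simp add: g_def field_simps)
    qed (simp add: g_def)
  qed
  also have "\<dots> = cst p \<pi> / \<delta>"
    by (simp add: cst_sum sum_divide_distrib)
  finally show ?thesis by simp
qed

lemma expdiff:
  fixes \<mu> \<nu> :: "'b::finite pmf"
  assumes osc: "\<And>x x'. f x \<le> f x' + D"
  shows "\<bar>measure_pmf.expectation \<mu> f - measure_pmf.expectation \<nu> f\<bar>
     \<le> D * (\<Sum>x\<in>UNIV. \<bar>pmf \<mu> x - pmf \<nu> x\<bar>)"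
proof -
  define x0 :: 'b where "x0 = undefined"
  have s1: "sum (pmf \<mu>) UNIV = 1" and s2: "sum (pmf \<nu>) UNIV = 1" by (auto intro: sum_pmf_eq_1)
  have s: "(\<Sum>x\<in>UNIV. pmf \<mu> x - pmf \<nu> x) = 0"
    by (simp add: sum_subtractf s1 s2)
  have s3: "(\<Sum>x\<in>UNIV. (pmf \<mu> x - pmf \<nu> x) * f x0) = 0"
    by (simp add: sum_distrib_right[symmetric] s)
  have "measure_pmf.expectation \<mu> f - measure_pmf.expectation \<nu> f
      = (\<Sum>x\<in>UNIV. (pmf \<mu> x - pmf \<nu> x) * f x)"
    by (simp add: exp_sum sum_subtractf left_diff_distrib)
  also have "\<dots> = (\<Sum>x\<in>UNIV. (pmf \<mu> x - pmf \<nu> x) * f x) - (\<Sum>x\<in>UNIV. (pmf \<mu> x - pmf \<nu> x) * f x0)"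
    using s3 by simp
  also have "\<dots> = (\<Sum>x\<in>UNIV. (pmf \<mu> x - pmf \<nu> x) * (f x - f x0))"
    by (simp add: right_diff_distrib sum_subtractf)
  finally have eq: "measure_pmf.expectation \<mu> f - measure_pmf.expectation \<nu> f
      = (\<Sum>x\<in>UNIV. (pmf \<mu> x - pmf \<nu> x) * (f x - f x0))" .
  have "\<bar>\<Sum>x\<in>UNIV. (pmf \<mu> x - pmf \<nu> x) * (f x - f x0)\<bar>
      \<le> (\<Sum>x\<in>UNIV. \<bar>pmf \<mu> x - pmf \<nu> x\<bar> * D)"
  proof (rule order_trans[OF sum_abs], intro sum_mono)
    fix x
    have "\<bar>f x - f x0\<bar> \<le> D" using osc[of x x0] osc[of x0 x] by linarith
    then show "\<bar>(pmf \<mu> x - pmf \<nu> x) * (f x - f x0)\<bar> \<le> \<bar>pmf \<mu> x - pmf \<nu> x\<bar> * D"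
      by (simp add: abs_mult mult_left_mono)
  qed
  then show ?thesis by (simp add: eq sum_distrib_left mult.commute)
qed


lemma Flip:
  fixes \<theta> \<mu> \<nu> :: "'a::{metric_space,finite} pmf"
  assumes D: "\<And>x y::'a. dist x y powr p \<le> D"
  shows "Wpp p \<theta> \<mu> \<le> Wpp p \<theta> \<nu> + D * (\<Sum>z\<in>UNIV. \<bar>pmf \<mu> z - pmf \<nu> z\<bar>)"
proof (rule field_le_epsilon)
  fix \<eta> :: real assume "\<eta> > 0"
  then obtain \<gamma> where \<gamma>c: "\<gamma> \<in> couplings \<theta> \<nu>" and \<gamma>l: "cst p \<gamma> < Wpp p \<theta> \<nu> + \<eta>"
    using Wpp_approx by blast
  define g where "g x z = pmf \<gamma> (x,z)" for x z
  define m where "m z = min (pmf \<mu> z) (pmf \<nu> z)" for z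
  define a where "a z = (if pmf \<nu> z = 0 then 0 else m z / pmf \<nu> z)" for z
  define th where "th x = (\<Sum>z\<in>UNIV. g x z * (1 - a z))" for x
  define mu where "mu z = pmf \<mu> z - m z" for z
  define s where "s = (\<Sum>z\<in>UNIV. mu z)"
  define \<sigma> where "\<sigma> = (\<lambda>(x,z). g x z * a z + th x * mu z / s)"
  have D0: "0 \<le> D" using D[of undefined undefined] by simp
  have gn: "0 \<le> g x z" for x z by (simp add: g_def)
  have a0: "0 \<le> a z" for z by (simp add: a_def m_def)
  have a1: "a z \<le> 1" for z by (simp add: a_def m_def)
  have g\<theta>: "(\<Sum>z\<in>UNIV. g x z) = pmf \<theta> x" for x by (simp add: g_def couplingD(1)[OF \<gamma>c])
  have g\<nu>: "(\<Sum>x\<in>UNIV. g x z) = pmf \<nu> z" for z by (simp add: g_def couplingD(2)[OF \<gamma>c])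
  have ga: "(\<Sum>x\<in>UNIV. g x z * a z) = m z" for z
  proof -
    have "(\<Sum>x\<in>UNIV. g x z * a z) = pmf \<nu> z * a z" by (simp add: sum_distrib_right[symmetric] g\<nu>)
    also have "\<dots> = m z" by (auto simp: a_def m_def)
    finally show ?thesis .
  qed
  have ga2: "(\<Sum>x\<in>UNIV. g x z) * a z = m z" for z using ga[of z] by (simp add: sum_distrib_right)
  have thn: "0 \<le> th x" for x unfolding th_def using gn a1 by (intro sum_nonneg mult_nonneg_nonneg) auto
  have mun: "0 \<le> mu z" for z by (simp add: mu_def m_def)
  have sn: "0 \<le> s" unfolding s_def using mun by (intro sum_nonneg) auto
  have S1: "sum (pmf \<mu>) UNIV = 1" and S2: "sum (pmf \<nu>) UNIV = 1" by (auto intro: sum_pmf_eq_1)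
  have ths: "(\<Sum>x\<in>UNIV. th x) = s"
  proof -
    have "(\<Sum>x\<in>UNIV. th x) = (\<Sum>z\<in>UNIV. \<Sum>x\<in>UNIV. g x z * (1 - a z))"
      unfolding th_def by (rule sum.swap)
    also have "\<dots> = (\<Sum>z\<in>UNIV. pmf \<nu> z - m z)"
      by (simp add: right_diff_distrib sum_subtractf ga g\<nu>)
    also have "\<dots> = s" by (simp add: s_def mu_def sum_subtractf S1 S2)
    finally show ?thesis .
  qed
  have th0: "th x = 0" if "s = 0" for x
    using ths that thn sum_nonneg_eq_0_iff[of UNIV th] by auto
  have mu0: "mu z = 0" if "s = 0" for z
    using that mun sum_nonneg_eq_0_iff[of UNIV mu] unfolding s_def by auto
  have gas: "(\<Sum>z\<in>UNIV. g x z * a z) = pmf \<theta> x - th x" for x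
    by (simp add: th_def right_diff_distrib sum_subtractf g\<theta>)
  have m1: "(\<Sum>z\<in>UNIV. \<sigma> (x,z)) = pmf \<theta> x" for x
  proof -
    have "(\<Sum>z\<in>UNIV. \<sigma> (x,z)) = (\<Sum>z\<in>UNIV. g x z * a z) + th x * s / s"
      by (simp add: \<sigma>_def sum.distrib s_def sum_divide_distrib[symmetric] sum_distrib_left[symmetric])
    then show ?thesis using th0[of x] by (cases "s = 0") (auto simp: gas)
  qed
  have m2: "(\<Sum>x\<in>UNIV. \<sigma> (x,z)) = pmf \<mu> z" for z
  proof -
    have "(\<Sum>x\<in>UNIV. \<sigma> (x,z)) = m z + mu z * s / s"
      by (simp add: \<sigma>_def sum.distrib ga sum_divide_distrib[symmetric] sum_distrib_right[symmetric] ths ga2)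
    then show ?thesis using mu0[of z] by (cases "s = 0") (auto simp: mu_def)
  qed
  have \<sigma>n: "0 \<le> \<sigma> z" for z
    using gn a0 thn mun sn by (auto simp: \<sigma>_def split: prod.splits intro!: add_nonneg_nonneg)
  have "Wpp p \<theta> \<mu> \<le> (\<Sum>x\<in>UNIV. \<Sum>z\<in>UNIV. \<sigma> (x,z) * dist x z powr p)"
    by (rule mk_coupling[OF \<sigma>n m1 m2])
  also have "\<dots> \<le> (\<Sum>x\<in>UNIV. \<Sum>z\<in>UNIV. g x z * dist x z powr p + th x * mu z / s * D)"
  proof (intro sum_mono)
    fix x z
    have "g x z * a z * dist x z powr p \<le> g x z * dist x z powr p"
      using gn[of x z] a1[of z] by (intro mult_right_mono) (auto intro: mult_left_le)
    moreover have "th x * mu z / s * dist x z powr p \<le> th x * mu z / s * D"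
      using thn[of x] mun[of z] sn D[of x z] by (intro mult_left_mono) auto
    ultimately show "\<sigma> (x,z) * dist x z powr p \<le> g x z * dist x z powr p + th x * mu z / s * D"
      by (simp add: \<sigma>_def distrib_right)
  qed
  also have "\<dots> = cst p \<gamma> + (\<Sum>x\<in>UNIV. th x) * (\<Sum>z\<in>UNIV. mu z) / s * D"
  proof -
    have "(\<Sum>x\<in>UNIV. th x) * (\<Sum>z\<in>UNIV. mu z) / s * D = (\<Sum>x\<in>UNIV. \<Sum>z\<in>UNIV. th x * mu z) / s * D"
      by (simp add: sum_product)
    also have "\<dots> = (\<Sum>x\<in>UNIV. \<Sum>z\<in>UNIV. th x * mu z / s * D)"
      by (simp add: sum_divide_distrib sum_distrib_right)
    finally show ?thesis by (simp add: sum.distrib cst_sum g_def)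
  qed
  also have "(\<Sum>x\<in>UNIV. th x) * (\<Sum>z\<in>UNIV. mu z) / s * D \<le> D * (\<Sum>z\<in>UNIV. \<bar>pmf \<mu> z - pmf \<nu> z\<bar>)"
  proof -
    have "(\<Sum>x\<in>UNIV. th x) * (\<Sum>z\<in>UNIV. mu z) / s \<le> s"
      unfolding ths s_def[symmetric] by (cases "s = 0") auto
    also have "s \<le> (\<Sum>z\<in>UNIV. \<bar>pmf \<mu> z - pmf \<nu> z\<bar>)"
      unfolding s_def by (intro sum_mono) (auto simp: mu_def m_def)
    finally have "(\<Sum>x\<in>UNIV. th x) * (\<Sum>z\<in>UNIV. mu z) / s \<le> (\<Sum>z\<in>UNIV. \<bar>pmf \<mu> z - pmf \<nu> z\<bar>)" .
    from mult_right_mono[OF this D0] show ?thesis by (simp add: mult.commute)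
  qed
  finally show "Wpp p \<theta> \<mu> \<le> Wpp p \<theta> \<nu> + D * (\<Sum>z\<in>UNIV. \<bar>pmf \<mu> z - pmf \<nu> z\<bar>) + \<eta>"
    using \<gamma>l by simp
qed


theorem theoremB6:
  fixes p :: real
    and \<theta> :: "'a::{metric_space,finite} pmf"
    and \<mu>s :: "nat \<Rightarrow> 'a pmf"
    and \<phi> \<psi> :: "nat \<Rightarrow> 'a \<Rightarrow> real"
    and \<epsilon> :: real
  assumes p: "1 < p"
    and dense: "\<And>\<nu> e. e > 0 \<Longrightarrow> \<exists>k. Wp p \<nu> (\<mu>s k) < e"
    and psi: "\<And>k. \<psi> k = c_transform p (\<phi> k)"
    and phi: "\<And>k. \<phi> k = c_transform p (\<psi> k)"
    and opt: "\<And>k. Wpp p \<theta> (\<mu>s k) =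
       measure_pmf.expectation (\<mu>s k) (\<phi> k) + measure_pmf.expectation \<theta> (\<psi> k)"
    and eps: "\<epsilon> > 0"
  shows "\<exists>I. finite I \<and> I \<noteq> {} \<and>
    (\<forall>\<mu>. \<bar>Wpp p \<theta> \<mu> -
        Max ((\<lambda>k. measure_pmf.expectation \<mu> (\<phi> k) + measure_pmf.expectation \<theta> (\<psi> k)) ` I)\<bar> \<le> \<epsilon>)"
proof -
  define L1 where "L1 \<alpha> \<beta> = (\<Sum>x\<in>UNIV. \<bar>pmf \<alpha> x - pmf \<beta> x\<bar>)" for \<alpha> \<beta> :: "'a pmf"
  define G where "G k \<mu> = measure_pmf.expectation \<mu> (\<phi> k) + measure_pmf.expectation \<theta> (\<psi> k)" for k \<mu>
  define Dp where "Dp = Max ((\<lambda>(x,y). dist x y powr p) ` (UNIV::('a\<times>'a) set))"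
  have Dle: "dist x y powr p \<le> Dp" for x y :: 'a
    unfolding Dp_def by (rule Max_ge) (auto intro: image_eqI[where x="(x,y)"])
  have D0: "0 \<le> Dp" using Dle[of undefined undefined] by simp
  define \<delta> where "\<delta> = Min (insert 1 ((\<lambda>(x,y). dist x y powr p) ` {z::'a\<times>'a. fst z \<noteq> snd z}))"
  have \<delta>0: "0 < \<delta>"
    unfolding \<delta>_def by (subst Min_gr_iff) auto
  have \<delta>le: "\<delta> \<le> dist x y powr p" if "x \<noteq> y" for x y :: 'a
    unfolding \<delta>_def using that by (intro Min_le) auto
  have dense2: "\<exists>k. L1 \<nu> (\<mu>s k) < \<eta>" if "\<eta> > 0" for \<nu> \<eta>
  proof -
    define t where "t = \<eta> * \<delta> / 4"
    have t0: "t > 0" using that \<delta>0 by (simp add: t_def)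
    obtain k where k: "Wp p \<nu> (\<mu>s k) < t powr (1/p)"
      using dense[of "t powr (1/p)"] t0 by auto
    have wt: "Wpp p \<nu> (\<mu>s k) < t"
    proof (rule ccontr)
      assume "\<not> ?thesis"
      then have "t powr (1/p) \<le> Wpp p \<nu> (\<mu>s k) powr (1/p)"
        using t0 p by (intro powr_mono2) auto
      with k show False by (simp add: Wp_def)
    qed
    obtain \<pi> where \<pi>: "\<pi> \<in> couplings \<nu> (\<mu>s k)" and \<pi>l: "cst p \<pi> < Wpp p \<nu> (\<mu>s k) + t"
      using Wpp_approx[OF t0] by blast
    have "L1 \<nu> (\<mu>s k) \<le> 2 * cst p \<pi> / \<delta>"
      unfolding L1_def by (rule L1_le[OF \<pi> \<delta>0 \<delta>le])
    also have "\<dots> < 2 * (2 * t) / \<delta>"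
      using \<pi>l wt \<delta>0 by (intro divide_strict_right_mono) auto
    also have "\<dots> = \<eta>" using \<delta>0 by (simp add: t_def)
    finally show ?thesis by blast
  qed
  have key: "Wpp p \<theta> \<mu> - G k \<mu> \<le> 2 * Dp * L1 \<mu> (\<mu>s k)" for \<mu> k
  proof -
    have f: "Wpp p \<theta> \<mu> \<le> Wpp p \<theta> (\<mu>s k) + Dp * L1 \<mu> (\<mu>s k)"
      unfolding L1_def by (rule Flip[OF Dle])
    have osc: "\<phi> k x \<le> \<phi> k x' + Dp" for x x'
      unfolding phi[of k] by (rule ctrans_osc[OF Dle])
    have "\<bar>measure_pmf.expectation \<mu> (\<phi> k) - measure_pmf.expectation (\<mu>s k) (\<phi> k)\<bar> \<le> Dp * L1 \<mu> (\<mu>s k)"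
      unfolding L1_def by (rule expdiff[OF osc])
    then show ?thesis using f opt[of k] by (simp add: G_def)
  qed
  have low: "G k \<mu> \<le> Wpp p \<theta> \<mu>" for k \<mu>
    unfolding G_def by (rule lower[OF psi])
  define V :: "'a pmf \<Rightarrow> (real, 'a) vec" where "V \<mu> = (\<chi> x. pmf \<mu> x)" for \<mu>
  have Vbox: "V \<mu> \<in> cbox 0 1" for \<mu>
    by (simp add: V_def mem_box_cart pmf_le_1)
  have L1V: "L1 \<alpha> \<beta> \<le> real CARD('a) * dist (V \<alpha>) (V \<beta>)" for \<alpha> \<beta>
  proof -
    have "L1 \<alpha> \<beta> \<le> (\<Sum>x\<in>(UNIV::'a set). dist (V \<alpha>) (V \<beta>))"
      unfolding L1_def dist_norm
    proof (intro sum_mono)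
      fix x
      show "\<bar>pmf \<alpha> x - pmf \<beta> x\<bar> \<le> norm (V \<alpha> - V \<beta>)"
        using component_le_norm_cart[of "V \<alpha> - V \<beta>" x] by (simp add: V_def)
    qed
    then show ?thesis by simp
  qed
  have L1tri: "L1 \<alpha> \<gamma> \<le> L1 \<alpha> \<beta> + L1 \<beta> \<gamma>" for \<alpha> \<beta> \<gamma>
    unfolding L1_def sum.distrib[symmetric] by (intro sum_mono) linarith
  define n where "n = real CARD('a)"
  have n0: "n > 0" by (simp add: n_def)
  define \<eta> where "\<eta> = \<epsilon> / (2 * Dp + 1)"
  have \<eta>0: "\<eta> > 0" using eps D0 by (simp add: \<eta>_def)
  define r where "r = \<eta> / (4 * n)"
  have r0: "r > 0" using \<eta>0 n0 by (simp add: r_def)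
  have "compact (cbox (0::(real, 'a) vec) 1)" by simp
  then obtain K where Kf: "finite K" and Kc: "cbox (0::(real, 'a) vec) 1 \<subseteq> (\<Union>x\<in>K. ball x r)"
    unfolding compact_eq_totally_bounded using r0 by blast
  define nu where "nu w = (SOME \<nu>. dist w (V \<nu>) < r)" for w
  define kk where "kk w = (SOME k. L1 (nu w) (\<mu>s k) < \<eta> / 2)" for w
  have kk: "L1 (nu w) (\<mu>s (kk w)) < \<eta> / 2" for w
    unfolding kk_def by (rule someI_ex) (rule dense2, use \<eta>0 in simp)
  define I where "I = kk ` K"
  have If: "finite I" using Kf by (simp add: I_def)
  have close: "\<exists>k\<in>I. L1 \<mu> (\<mu>s k) < \<eta>" for \<mu>
  proof -
    obtain w where w: "w \<in> K" and dw: "dist w (V \<mu>) < r" using Kc Vbox[of \<mu>] by auto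
    have dnu: "dist w (V (nu w)) < r"
      unfolding nu_def by (rule someI[of _ \<mu>]) (rule dw)
    have "dist (V \<mu>) (V (nu w)) < 2 * r"
      using dist_triangle[of "V \<mu>" "V (nu w)" w] dw dnu by (simp add: dist_commute)
    then have "L1 \<mu> (nu w) < n * (2 * r)"
      using L1V[of \<mu> "nu w"] n0 unfolding n_def[symmetric]
      by (meson less_le_trans mult_strict_left_mono order.refl order_le_less_trans)
    also have "n * (2 * r) = \<eta> / 2" using n0 by (simp add: r_def)
    finally have "L1 \<mu> (nu w) < \<eta> / 2" .
    then have "L1 \<mu> (\<mu>s (kk w)) < \<eta>"
      using L1tri[where \<alpha>=\<mu> and \<beta>="nu w" and \<gamma>="\<mu>s (kk w)"] kk[of w] by linarith
    then show ?thesis using w by (auto simp: I_def)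
  qed
  have Ine: "I \<noteq> {}" using close[of \<theta>] by auto
  have "\<bar>Wpp p \<theta> \<mu> - Max ((\<lambda>k. G k \<mu>) ` I)\<bar> \<le> \<epsilon>" for \<mu>
  proof -
    obtain k where kI: "k \<in> I" and kl: "L1 \<mu> (\<mu>s k) < \<eta>" using close by blast
    have M1: "Max ((\<lambda>k. G k \<mu>) ` I) \<le> Wpp p \<theta> \<mu>"
      using If Ine low by (intro Max.boundedI) auto
    have M2: "G k \<mu> \<le> Max ((\<lambda>k. G k \<mu>) ` I)"
      using If kI by (intro Max_ge) auto
    have "2 * Dp * L1 \<mu> (\<mu>s k) \<le> 2 * Dp * \<eta>"
      using kl D0 by (intro mult_left_mono) auto
    also have "2 * Dp * \<eta> \<le> \<epsilon>"
      using eps D0 by (simp add: \<eta>_def field_simps)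
    finally show ?thesis using key[of \<mu> k] M1 M2 by linarith
  qed
  then show ?thesis using If Ine unfolding G_def by blast
qed

end
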